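(* For all pairs of states $\rho,\sigma$, $\lambda(\rho\otimes\sigma)=\max\{\lambda(\rho),\lambda(\sigma)\}$.
   Context: Fixed computational basis (product basis for tensor products); $\Delta$ the dephasing map; $R^\rho=\Delta(\rho)^{-1/2}\rho\Delta(\rho)^{-1/2}$ (inverse on the support). For a $d$-dimensional state, $\lambda(\rho)=\max\{|R^\rho_{ij}|:1\le i<j\le d,\ |R^\rho_{ij}|<1\}$, with $\lambda(\rho)=0$ if this set is empty (for $\rho\otimes\sigma$ the indices run over pairs of product basis labels, ordered arbitrarily). *)

theory Defs
  imports Complex_Main
begin

text \<open>A d x d complex matrix is represented as a function nat => nat => complex;
  only the entries with indices below d are meaningful. Computational basis
  labels are 0..d-1.\<close>

definition is_state :: "nat \<Rightarrow> (nat \<Rightarrow> nat \<Rightarrow> complex) \<Rightarrow> bool" where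
  "is_state d \<rho> \<longleftrightarrow>
     (\<forall>i<d. \<forall>j<d. \<rho> j i = cnj (\<rho> i j)) \<and>
     (\<forall>v :: nat \<Rightarrow> complex. 0 \<le> Re (\<Sum>i<d. \<Sum>j<d. cnj (v i) * \<rho> i j * v j)) \<and>
     (\<Sum>i<d. \<rho> i i) = 1"

text \<open>Diagonal entries of Delta(rho)^(-1/2), the inverse taken on the support.\<close>
definition deph_inv_sqrt :: "(nat \<Rightarrow> nat \<Rightarrow> complex) \<Rightarrow> nat \<Rightarrow> complex" where
  "deph_inv_sqrt \<rho> i = (if Re (\<rho> i i) > 0 then complex_of_real (1 / sqrt (Re (\<rho> i i))) else 0)"

text \<open>R^rho = Delta(rho)^(-1/2) rho Delta(rho)^(-1/2) (product with diagonal matrices).\<close>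
definition Rmat :: "(nat \<Rightarrow> nat \<Rightarrow> complex) \<Rightarrow> nat \<Rightarrow> nat \<Rightarrow> complex" where
  "Rmat \<rho> i j = deph_inv_sqrt \<rho> i * \<rho> i j * deph_inv_sqrt \<rho> j"

definition lam :: "nat \<Rightarrow> (nat \<Rightarrow> nat \<Rightarrow> complex) \<Rightarrow> real" where
  "lam d \<rho> = (let S = {cmod (Rmat \<rho> i j) | i j. i < j \<and> j < d \<and> cmod (Rmat \<rho> i j) < 1}
              in if S = {} then 0 else Max S)"

text \<open>Tensor product in the product basis; the product label (i,k), i<d1, k<d2,
  is encoded as i*d2+k (lexicographic ordering of the product labels).\<close>
definition tensor :: "nat \<Rightarrow> (nat \<Rightarrow> nat \<Rightarrow> complex) \<Rightarrow> (nat \<Rightarrow> nat \<Rightarrow> complex) \<Rightarrow> nat \<Rightarrow> nat \<Rightarrow> complex" where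
  "tensor d2 \<rho> \<sigma> a b = \<rho> (a div d2) (b div d2) * \<sigma> (a mod d2) (b mod d2)"

end

theory Submission imports Defs begin

lemma herm: "is_state d \<rho> \<Longrightarrow> i < d \<Longrightarrow> j < d \<Longrightarrow> \<rho> j i = cnj (\<rho> i j)"
  unfolding is_state_def by blast
lemma psd: "is_state d \<rho> \<Longrightarrow> 0 \<le> Re (\<Sum>i<d. \<Sum>j<d. cnj (v i) * \<rho> i j * v j)"
  unfolding is_state_def by blast
lemma tr: "is_state d \<rho> \<Longrightarrow> (\<Sum>i<d. \<rho> i i) = 1"
  unfolding is_state_def by blast
lemma sum2:
  assumes "finite A" "i \<in> A" "j \<in> A" "i \<noteq> j" "\<And>n. n \<in> A \<Longrightarrow> n \<noteq> i \<Longrightarrow> n \<noteq> j \<Longrightarrow> g n = 0"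
  shows "sum g A = g i + (g j :: 'a::comm_monoid_add)"
proof -
  have "sum g A = sum g {i,j}"
    by (rule sum.mono_neutral_right) (use assms in auto)
  then show ?thesis using assms by simp
qed

lemma sum1:
  assumes "finite A" "i \<in> A" "\<And>n. n \<in> A \<Longrightarrow> n \<noteq> i \<Longrightarrow> g n = 0"
  shows "sum g A = (g i :: 'a::comm_monoid_add)"
proof -
  have "sum g A = sum g {i}"
    by (rule sum.mono_neutral_right) (use assms in auto)
  then show ?thesis using assms by simp
qed

lemma quad2:
  fixes \<rho> :: "nat \<Rightarrow> nat \<Rightarrow> complex" and a b :: complex
  assumes "i < d" "j < d" "i \<noteq> j"
  defines "v \<equiv> (\<lambda>n. if n = i then a else if n = j then b else 0)"
  shows "(\<Sum>i'<d. \<Sum>j'<d. cnj (v i') * \<rho> i' j' * v j')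
     = cnj a * \<rho> i i * a + cnj a * \<rho> i j * b + cnj b * \<rho> j i * a + cnj b * \<rho> j j * b"
proof -
  have inner: "(\<Sum>j'<d. cnj (v i') * \<rho> i' j' * v j') = cnj (v i') * \<rho> i' i * a + cnj (v i') * \<rho> i' j * b" for i'
    using assms by (subst sum2[of _ i j]) (simp_all add: v_def)
  show ?thesis unfolding inner
    using assms by (subst sum2[of _ i j]) (simp_all add: v_def algebra_simps)
qed

lemma quad1:
  fixes \<rho> :: "nat \<Rightarrow> nat \<Rightarrow> complex" and a :: complex
  assumes "i < d"
  defines "v \<equiv> (\<lambda>n. if n = i then a else 0)"
  shows "(\<Sum>i'<d. \<Sum>j'<d. cnj (v i') * \<rho> i' j' * v j') = cnj a * \<rho> i i * a"
proof -
  have inner: "(\<Sum>j'<d. cnj (v i') * \<rho> i' j' * v j') = cnj (v i') * \<rho> i' i * a" for i'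
    by (subst sum1[of _ i]) (use assms in \<open>auto simp: v_def\<close>)
  show ?thesis unfolding inner
    by (subst sum1[of _ i]) (use assms in \<open>auto simp: v_def\<close>)
qed

lemma diag:
  assumes "is_state d \<rho>" "i < d"
  shows "Im (\<rho> i i) = 0" "Re (\<rho> i i) \<ge> 0" "\<rho> i i = complex_of_real (Re (\<rho> i i))"
proof -
  have "\<rho> i i = cnj (\<rho> i i)" using herm[OF assms(1,2,2)] .
  then have "Im (\<rho> i i) = Im (cnj (\<rho> i i))" by (rule arg_cong)
  then show im: "Im (\<rho> i i) = 0" by simp
  then show "\<rho> i i = complex_of_real (Re (\<rho> i i))" by (simp add: complex_eq_iff)
  have "0 \<le> Re (\<Sum>i'<d. \<Sum>j'<d. cnj ((\<lambda>n. if n = i then 1 else 0) i') * \<rho> i' j' * (\<lambda>n. if n = i then 1 else 0) j')"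
    using psd[OF assms(1)] .
  then show "Re (\<rho> i i) \<ge> 0" using quad1[OF assms(2), of 1 \<rho>] by simp
qed

lemma cs:
  assumes "is_state d \<rho>" "i < d" "j < d" "i \<noteq> j"
  shows "Re (\<rho> i i) * (cmod (\<rho> i j))^2 \<le> Re (\<rho> i i) * (Re (\<rho> i i) * Re (\<rho> j j))"
proof -
  define p where "p = Re (\<rho> i i)"
  define q where "q = Re (\<rho> j j)"
  define z where "z = \<rho> i j"
  have pi: "\<rho> i i = of_real p" using diag(3)[OF assms(1,2)] p_def by simp
  have qj: "\<rho> j j = of_real q" using diag(3)[OF assms(1,3)] q_def by simp
  have ji: "\<rho> j i = cnj z" using herm[OF assms(1,2,3)] z_def by simp
  have "0 \<le> Re (\<Sum>i'<d. \<Sum>j'<d. cnj ((\<lambda>n. if n = i then - z else if n = j then of_real p else 0) i') * \<rho> i' j' * (\<lambda>n. if n = i then - z else if n = j then of_real p else 0) j')"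
    using psd[OF assms(1)] .
  also have "\<dots> = Re (cnj (-z) * of_real p * (-z) + cnj (-z) * z * of_real p + of_real p * cnj z * (-z) + of_real p * of_real q * of_real p)"
    using quad2[OF assms(2-4), of "-z" "of_real p" \<rho>] pi qj ji z_def by simp
  also have "\<dots> = p * p * q - p * (cmod z)^2"
  proof -
    have "cnj z * z = of_real ((cmod z)^2)" by (metis complex_norm_square mult.commute)
    then show ?thesis by (simp add: algebra_simps)
  qed
  finally show ?thesis unfolding p_def q_def z_def by (simp add: algebra_simps)
qed


lemma D_cmod: "cmod (deph_inv_sqrt \<rho> i) = (if Re (\<rho> i i) > 0 then 1 / sqrt (Re (\<rho> i i)) else 0)"
  by (simp add: deph_inv_sqrt_def norm_divide)

lemma rsym:
  assumes "is_state d \<rho>" "i < d" "j < d"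
  shows "cmod (Rmat \<rho> j i) = cmod (Rmat \<rho> i j)"
  using herm[OF assms] by (simp add: Rmat_def norm_mult)

lemma rdiag:
  assumes "is_state d \<rho>" "i < d"
  shows "cmod (Rmat \<rho> i i) = (if Re (\<rho> i i) > 0 then 1 else 0)"
proof -
  have e: "cmod (\<rho> i i) = Re (\<rho> i i)"
    using diag[OF assms] by (metis abs_of_nonneg norm_of_real)
  show ?thesis unfolding Rmat_def norm_mult D_cmod e
    using diag(2)[OF assms] by (auto simp: divide_simps)
qed

lemma rle1:
  assumes "is_state d \<rho>" "i < d" "j < d"
  shows "cmod (Rmat \<rho> i j) \<le> 1"
proof (cases "i = j")
  case True then show ?thesis using rdiag[OF assms(1,2)] by simp
next
  case False
  show ?thesis
  proof (cases "Re (\<rho> i i) > 0 \<and> Re (\<rho> j j) > 0")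
    case False then show ?thesis by (auto simp: Rmat_def norm_mult D_cmod)
  next
    case True
    define p where "p = Re (\<rho> i i)"
    define q where "q = Re (\<rho> j j)"
    have p: "p > 0" and q: "q > 0" using True p_def q_def by auto
    have "p * (cmod (\<rho> i j))^2 \<le> p * (p * q)" using cs[OF assms \<open>i \<noteq> j\<close>] p_def q_def by simp
    then have "(cmod (\<rho> i j))^2 \<le> p * q" using p by simp
    then have "cmod (\<rho> i j) \<le> sqrt (p * q)" by (simp add: real_le_rsqrt)
    then have "cmod (\<rho> i j) \<le> sqrt p * sqrt q" by (simp add: real_sqrt_mult)
    then show ?thesis using p q p_def q_def
      by (simp add: Rmat_def norm_mult D_cmod divide_simps)
  qed
qed

lemma exists_pos:
  assumes "is_state d \<rho>"
  shows "\<exists>k<d. Re (\<rho> k k) > 0"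
proof (rule ccontr)
  assume "\<not> ?thesis"
  then have "\<forall>k<d. Re (\<rho> k k) \<le> 0" by auto
  then have "(\<Sum>k<d. Re (\<rho> k k)) \<le> 0" by (intro sum_nonpos) auto
  moreover have "(\<Sum>k<d. Re (\<rho> k k)) = 1" using arg_cong[OF tr[OF assms], of Re] by (simp add: Re_sum)
  ultimately show False by simp
qed

lemma deph_tensor:
  assumes "is_state d1 \<rho>" "is_state d2 \<sigma>" "i < d1" "k < d2"
  shows "deph_inv_sqrt (tensor d2 \<rho> \<sigma>) (i * d2 + k) = deph_inv_sqrt \<rho> i * deph_inv_sqrt \<sigma> k"
proof -
  have t: "tensor d2 \<rho> \<sigma> (i * d2 + k) (i * d2 + k) = \<rho> i i * \<sigma> k k"
    using assms(4) by (simp add: tensor_def)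
  define p where "p = Re (\<rho> i i)"
  define q where "q = Re (\<sigma> k k)"
  have pe: "\<rho> i i = of_real p" using diag(3)[OF assms(1,3)] p_def by simp
  have qe: "\<sigma> k k = of_real q" using diag(3)[OF assms(2,4)] q_def by simp
  have p0: "p \<ge> 0" using diag(2)[OF assms(1,3)] p_def by simp
  have q0: "q \<ge> 0" using diag(2)[OF assms(2,4)] q_def by simp
  have "Re (of_real p * of_real q :: complex) = p * q" by simp
  have pos: "(p * q > 0) \<longleftrightarrow> (p > 0 \<and> q > 0)"
    using p0 q0 by (metis less_eq_real_def mult_pos_pos mult_zero_left mult_zero_right)
  show ?thesis
    unfolding deph_inv_sqrt_def t pe qe
    using pos by (simp add: real_sqrt_mult)
qed

lemma R_tensor:
  assumes "is_state d1 \<rho>" "is_state d2 \<sigma>" "i < d1" "k < d2" "j < d1" "l < d2"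
  shows "Rmat (tensor d2 \<rho> \<sigma>) (i * d2 + k) (j * d2 + l) = Rmat \<rho> i j * Rmat \<sigma> k l"
  unfolding Rmat_def deph_tensor[OF assms(1-4)] deph_tensor[OF assms(1,2,5,6)]
  using assms(4,6) by (simp add: tensor_def algebra_simps)


definition SS :: "nat \<Rightarrow> (nat \<Rightarrow> nat \<Rightarrow> complex) \<Rightarrow> real set" where
  "SS d \<rho> = {cmod (Rmat \<rho> i j) | i j. i < j \<and> j < d \<and> cmod (Rmat \<rho> i j) < 1}"

lemma lam_SS: "lam d \<rho> = (if SS d \<rho> = {} then 0 else Max (SS d \<rho>))"
  by (simp only: lam_def SS_def Let_def)

lemma SS_finite: "finite (SS d \<rho>)"
proof -
  have "SS d \<rho> \<subseteq> (\<lambda>(i, j). cmod (Rmat \<rho> i j)) ` ({..<d} \<times> {..<d})"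
    unfolding SS_def by force
  then show ?thesis by (rule finite_subset) auto
qed

lemma lam_ge0: "0 \<le> lam d \<rho>"
proof (cases "SS d \<rho> = {}")
  case False
  then have "Max (SS d \<rho>) \<in> SS d \<rho>" using SS_finite by (rule_tac Max_in) auto
  then show ?thesis using False unfolding lam_SS SS_def by auto
qed (simp add: lam_SS)

lemma lam_upper: "x \<in> SS d \<rho> \<Longrightarrow> x \<le> lam d \<rho>"
  unfolding lam_SS using SS_finite by auto

lemma lam_cases: "lam d \<rho> = 0 \<or> lam d \<rho> \<in> SS d \<rho>"
proof (cases "SS d \<rho> = {}")
  case False
  then have "Max (SS d \<rho>) \<in> SS d \<rho>" using SS_finite by (rule_tac Max_in) auto
  then show ?thesis using False unfolding lam_SS by auto
qed (simp add: lam_SS)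

lemma lam_le: "(\<And>x. x \<in> SS d \<rho> \<Longrightarrow> x \<le> M) \<Longrightarrow> 0 \<le> M \<Longrightarrow> lam d \<rho> \<le> M"
  unfolding lam_SS using SS_finite by auto

lemma mem_le_lam:
  assumes "is_state d \<rho>" "i < d" "j < d" "i \<noteq> j" "cmod (Rmat \<rho> i j) < 1"
  shows "cmod (Rmat \<rho> i j) \<le> lam d \<rho>"
proof (cases "i < j")
  case True
  then show ?thesis using assms by (intro lam_upper) (auto simp: SS_def)
next
  case False
  then have "j < i" using assms(4) by simp
  moreover have e: "cmod (Rmat \<rho> j i) = cmod (Rmat \<rho> i j)" using rsym[OF assms(1-3)] .
  ultimately have "\<exists>i' j'. cmod (Rmat \<rho> j i) = cmod (Rmat \<rho> i' j') \<and> i' < j' \<and> j' < d \<and> cmod (Rmat \<rho> i' j') < 1"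
    using assms by (intro exI[of _ j] exI[of _ i]) auto
  then have "cmod (Rmat \<rho> j i) \<in> SS d \<rho>" unfolding SS_def by simp
  then show ?thesis using e lam_upper by metis
qed

lemma decomp:
  fixes a d1 d2 :: nat
  assumes "a < d1 * d2"
  shows "a div d2 < d1" "a mod d2 < d2" "a = (a div d2) * d2 + a mod d2"
proof -
  have "d2 > 0" using assms by (cases "d2 = 0") auto
  then show "a mod d2 < d2" by simp
  show "a div d2 < d1" using assms by (simp add: less_mult_imp_div_less)
  show "a = (a div d2) * d2 + a mod d2" by simp
qed

theorem lemma6:
  fixes \<rho> \<sigma> :: "nat \<Rightarrow> nat \<Rightarrow> complex" and d1 d2 :: nat
  assumes "is_state d1 \<rho>" and "is_state d2 \<sigma>"
  shows "lam (d1 * d2) (tensor d2 \<rho> \<sigma>) = max (lam d1 \<rho>) (lam d2 \<sigma>)"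
proof (rule antisym)
  let ?T = "tensor d2 \<rho> \<sigma>"
  let ?M = "max (lam d1 \<rho>) (lam d2 \<sigma>)"
  show "lam (d1 * d2) ?T \<le> ?M"
  proof (rule lam_le)
    show "0 \<le> ?M" using lam_ge0 by (simp add: le_max_iff_disj)
    fix x assume "x \<in> SS (d1 * d2) ?T"
    then obtain a b where ab: "a < b" "b < d1 * d2" "x = cmod (Rmat ?T a b)" "x < 1"
      unfolding SS_def by auto
    define i where "i = a div d2"
    define k where "k = a mod d2"
    define j where "j = b div d2"
    define l where "l = b mod d2"
    have a: "a < d1 * d2" using ab by simp
    have ik: "i < d1" "k < d2" "a = i * d2 + k" using decomp[OF a] i_def k_def by auto
    have jl: "j < d1" "l < d2" "b = j * d2 + l" using decomp[OF ab(2)] j_def l_def by auto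
    have ne: "i \<noteq> j \<or> k \<noteq> l" using ab(1) ik(3) jl(3) by auto
    define u where "u = cmod (Rmat \<rho> i j)"
    define w where "w = cmod (Rmat \<sigma> k l)"
    have xuw: "x = u * w" using ab(3) R_tensor[OF assms ik(1,2) jl(1,2)] ik(3) jl(3)
      by (simp add: u_def w_def norm_mult)
    have u01: "0 \<le> u" "u \<le> 1" using rle1[OF assms(1) ik(1) jl(1)] u_def by auto
    have w01: "0 \<le> w" "w \<le> 1" using rle1[OF assms(2) ik(2) jl(2)] w_def by auto
    have ud: "i = j \<Longrightarrow> u = 0 \<or> u = 1" using rdiag[OF assms(1) ik(1)] u_def by auto
    have wd: "k = l \<Longrightarrow> w = 0 \<or> w = 1" using rdiag[OF assms(2) ik(2)] w_def by auto
    have uS: "i \<noteq> j \<Longrightarrow> u < 1 \<Longrightarrow> u \<le> lam d1 \<rho>"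
      using mem_le_lam[OF assms(1) ik(1) jl(1)] u_def by auto
    have wS: "k \<noteq> l \<Longrightarrow> w < 1 \<Longrightarrow> w \<le> lam d2 \<sigma>"
      using mem_le_lam[OF assms(2) ik(2) jl(2)] w_def by auto
    have M0: "0 \<le> ?M" using lam_ge0 by (simp add: le_max_iff_disj)
    show "x \<le> ?M"
    proof (cases "u * w = 0")
      case True
      then have "x = 0" using xuw by simp
      then show ?thesis using M0 by simp
    next
      case False
      then have up: "u > 0" and wp: "w > 0" using u01 w01 by auto
      show ?thesis
      proof (cases "u < 1")
        case True
        then have "i \<noteq> j" using ud up by auto
        then have "u \<le> lam d1 \<rho>" using uS True by simp
        moreover have "u * w \<le> u" using up w01 by (simp add: mult_left_le)
        ultimately show ?thesis using xuw by (simp add: le_max_iff_disj)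
      next
        case False
        then have u1: "u = 1" using u01 by simp
        then have "w < 1" using xuw ab(4) by simp
        then have "k \<noteq> l" using wd wp by auto
        then have "w \<le> lam d2 \<sigma>" using wS \<open>w < 1\<close> by simp
        then show ?thesis using xuw u1 by (simp add: le_max_iff_disj)
      qed
    qed
  qed
  have "lam d1 \<rho> \<le> lam (d1 * d2) ?T"
  proof -
    from lam_cases[of d1 \<rho>] show ?thesis
    proof
      assume "lam d1 \<rho> = 0" then show ?thesis using lam_ge0 by simp
    next
      assume "lam d1 \<rho> \<in> SS d1 \<rho>"
      then obtain i j where ij: "i < j" "j < d1" "lam d1 \<rho> = cmod (Rmat \<rho> i j)" "cmod (Rmat \<rho> i j) < 1"
        unfolding SS_def by auto
      obtain k where k: "k < d2" "Re (\<sigma> k k) > 0" using exists_pos[OF assms(2)] by auto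
      have R: "cmod (Rmat ?T (i * d2 + k) (j * d2 + k)) = cmod (Rmat \<rho> i j)"
        using R_tensor[OF assms _ k(1) ij(2) k(1), of i] ij rdiag[OF assms(2) k(1)] k(2)
        by (simp add: norm_mult)
      have lt: "i * d2 + k < j * d2 + k" using ij(1) k(1) by simp
      have "j * d2 + k < (j + 1) * d2" using k(1) by simp
      also have "\<dots> \<le> d1 * d2" using ij(2) by (intro mult_right_mono) auto
      finally have lt2: "j * d2 + k < d1 * d2" .
      have "cmod (Rmat \<rho> i j) \<in> SS (d1 * d2) ?T"
        unfolding SS_def using lt lt2 R ij(4) by (metis (mono_tags, lifting) mem_Collect_eq)
      then show ?thesis using ij(3) lam_upper by metis
    qed
  qed
  moreover have "lam d2 \<sigma> \<le> lam (d1 * d2) ?T"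
  proof -
    from lam_cases[of d2 \<sigma>] show ?thesis
    proof
      assume "lam d2 \<sigma> = 0" then show ?thesis using lam_ge0 by simp
    next
      assume "lam d2 \<sigma> \<in> SS d2 \<sigma>"
      then obtain k l where kl: "k < l" "l < d2" "lam d2 \<sigma> = cmod (Rmat \<sigma> k l)" "cmod (Rmat \<sigma> k l) < 1"
        unfolding SS_def by auto
      obtain i where i: "i < d1" "Re (\<rho> i i) > 0" using exists_pos[OF assms(1)] by auto
      have R: "cmod (Rmat ?T (i * d2 + k) (i * d2 + l)) = cmod (Rmat \<sigma> k l)"
        using R_tensor[OF assms i(1) _ i(1) kl(2), of k] kl rdiag[OF assms(1) i(1)] i(2)
        by (simp add: norm_mult)
      have lt: "i * d2 + k < i * d2 + l" using kl(1) by simp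
      have "i * d2 + l < (i + 1) * d2" using kl(2) by simp
      also have "\<dots> \<le> d1 * d2" using i(1) by (intro mult_right_mono) auto
      finally have lt2: "i * d2 + l < d1 * d2" .
      have "cmod (Rmat \<sigma> k l) \<in> SS (d1 * d2) ?T"
        unfolding SS_def using lt lt2 R kl(4) by (metis (mono_tags, lifting) mem_Collect_eq)
      then show ?thesis using kl(3) lam_upper by metis
    qed
  qed
  ultimately show "?M \<le> lam (d1 * d2) ?T" by simp
qed

end
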